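(* If $[\gamma]\in J_1$ and $e([\gamma])=0$, then there exists $f\in F^\times$ with $[\gamma]=[f]$ in $J$.
   Context: $p$ odd prime; $F$ a field containing a primitive $p$th root of unity $\xi_p$; $K=F(\sqrt[p]{a})$, $a\in F^\times$, cyclic of degree $p$; $G=\mathrm{Gal}(K/F)=\langle\sigma\rangle$ with $\sigma(\sqrt[p]{a})=\xi_p\sqrt[p]{a}$; $\rho=\sigma-1$. $J=K^\times/K^{\times p}$ as a multiplicative $\mathbb{F}_p[G]$-module, $[\gamma]$ the class of $\gamma$; $J_i=\ker(\rho^i)$. For $[\gamma]\in J_{p-1}$, the index $e([\gamma])\in\mathbb{F}_p$ is defined by $\xi_p^{e([\gamma])}=\sigma(\delta)/\delta$ where $\delta\in K$ is any $p$th root of $N_{K/F}(\gamma)$ (which lies in $K$). *)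

theory Defs
  imports Main "HOL-Computational_Algebra.Primes"
begin

text \<open>Setting. The field K is modelled as the ambient type 'k (class field).
  sigma is a field automorphism of K generating Gal(K/F), of order p;
  F is the fixed field of sigma.\<close>

definition field_aut :: "('k::field \<Rightarrow> 'k) \<Rightarrow> bool" where
  "field_aut \<sigma> \<longleftrightarrow> bij \<sigma> \<and> (\<forall>x y. \<sigma> (x + y) = \<sigma> x + \<sigma> y)
     \<and> (\<forall>x y. \<sigma> (x * y) = \<sigma> x * \<sigma> y) \<and> \<sigma> 1 = 1"

definition fixed_field :: "('k::field \<Rightarrow> 'k) \<Rightarrow> 'k set" where
  "fixed_field \<sigma> = {x. \<sigma> x = x}"

definition normKF :: "('k::field \<Rightarrow> 'k) \<Rightarrow> nat \<Rightarrow> 'k \<Rightarrow> 'k" where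
  "normKF \<sigma> p \<gamma> = (\<Prod>i<p. (\<sigma> ^^ i) \<gamma>)"

definition is_pth_power :: "nat \<Rightarrow> 'k::field \<Rightarrow> bool" where
  "is_pth_power p x \<longleftrightarrow> (\<exists>\<beta>. \<beta> \<noteq> 0 \<and> x = \<beta> ^ p)"

text \<open>[gamma] in J_1 = ker(sigma - 1) on J = K^x/K^{x p}, written multiplicatively:
  sigma(gamma)/gamma is a p-th power.\<close>
definition in_J1 :: "('k::field \<Rightarrow> 'k) \<Rightarrow> nat \<Rightarrow> 'k \<Rightarrow> bool" where
  "in_J1 \<sigma> p \<gamma> \<longleftrightarrow> \<gamma> \<noteq> 0 \<and> is_pth_power p (\<sigma> \<gamma> / \<gamma>)"

text \<open>The index e([gamma]) in F_p, represented by a natural number in {0..<p}: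
  choose delta in K with delta^p = N(gamma); then sigma(delta)/delta = xi^e.\<close>
definition e_index :: "('k::field \<Rightarrow> 'k) \<Rightarrow> 'k \<Rightarrow> nat \<Rightarrow> 'k \<Rightarrow> nat" where
  "e_index \<sigma> \<xi> p \<gamma> =
     (let \<delta> = (SOME \<delta>. \<delta> ^ p = normKF \<sigma> p \<gamma>)
      in SOME k. k < p \<and> \<sigma> \<delta> = \<xi> ^ k * \<delta>)"

end

theory Submission
  imports Defs "HOL-Computational_Algebra.Polynomial"
begin

fun wseq :: "('k::field \<Rightarrow> 'k) \<Rightarrow> 'k \<Rightarrow> nat \<Rightarrow> 'k" where
  "wseq s b 0 = 1"
| "wseq s b (Suc k) = b * s (wseq s b k)"

lemma fa_add: "field_aut s \<Longrightarrow> s (x + y) = s x + s y" by (simp add: field_aut_def)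
lemma fa_mult: "field_aut s \<Longrightarrow> s (x * y) = s x * s y" by (simp add: field_aut_def)
lemma fa_one: "field_aut s \<Longrightarrow> s 1 = 1" by (simp add: field_aut_def)
lemma fa_zero: "field_aut s \<Longrightarrow> s 0 = 0"
proof -
  assume a: "field_aut s"
  have "s (0 + 0) = s 0 + s 0" using fa_add[OF a] .
  then have "s 0 + s 0 = s 0 + 0" by simp
  then show ?thesis by (rule add_left_imp_eq)
qed
lemma fa_nz: "field_aut s \<Longrightarrow> x \<noteq> 0 \<Longrightarrow> s x \<noteq> 0"
  by (metis fa_zero field_aut_def bij_def inj_eq)
lemma fa_pow: "field_aut s \<Longrightarrow> s (x ^ n) = s x ^ n"
  by (induction n) (simp_all add: fa_one fa_mult)
lemma fa_div: "field_aut s \<Longrightarrow> s (x / y) = s x / s y"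
proof (cases "y = 0")
  case True
  assume "field_aut s" then show ?thesis using True by (simp add: fa_zero)
next
  case False
  assume a: "field_aut s"
  have "s (x / y) * s y = s x" using False by (metis fa_mult[OF a] nonzero_divide_eq_eq)
  then show ?thesis using fa_nz[OF a False] by (simp add: eq_divide_eq)
qed
lemma fa_sum: "field_aut s \<Longrightarrow> s (\<Sum>i\<in>A. f i) = (\<Sum>i\<in>A. s (f i))"
  by (induction A rule: infinite_finite_induct) (simp_all add: fa_zero fa_add)
lemma fa_prod: "field_aut s \<Longrightarrow> s (\<Prod>i\<in>A. f i) = (\<Prod>i\<in>A. s (f i))"
  by (induction A rule: infinite_finite_induct) (simp_all add: fa_one fa_mult)
lemma fa_funpow: "field_aut s \<Longrightarrow> field_aut (s ^^ k)"
proof (induction k)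
  case 0 then show ?case by (simp add: field_aut_def bij_def inj_on_def)
next
  case (Suc k)
  then show ?case unfolding field_aut_def
    by (auto simp: bij_comp intro: bij_comp)
qed

lemma xi_pow1:
  fixes \<xi> :: "'k::field"
  assumes "prime p" "\<xi> ^ p = 1" "\<xi> \<noteq> 1" "0 < k" "k < p"
  shows "\<xi> ^ k \<noteq> 1"
proof
  assume h: "\<xi> ^ k = 1"
  have "\<not> p dvd k" using assms(4,5) by (auto dest: dvd_imp_le)
  hence "coprime k p" using prime_imp_coprime[OF assms(1)] coprime_commute by blast
  hence g: "gcd k p = 1" by simp
  obtain x y where "k * x = p * y + gcd k p" using bezout_nat[of k p] assms(4) by auto
  hence e: "k * x = p * y + 1" using g by simp
  have "\<xi> ^ (k * x) = 1" by (simp add: power_mult h)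
  moreover have "\<xi> ^ (p * y + 1) = \<xi>" by (simp add: power_add power_mult assms(2))
  ultimately show False using e assms(3) by simp
qed

lemma xi_inj:
  fixes \<xi> :: "'k::field"
  assumes "prime p" "\<xi> ^ p = 1" "\<xi> \<noteq> 1"
  shows "inj_on (\<lambda>i. \<xi> ^ i) {..<p}"
proof (rule inj_onI)
  have nz: "\<xi> \<noteq> 0"
  proof
    assume "\<xi> = 0"
    then have "\<xi> ^ p = 0" using prime_gt_0_nat[OF assms(1)] by simp
    with assms(2) show False by simp
  qed
  have *: "i = j" if "i < p" "j < p" "i \<le> j" "\<xi> ^ i = \<xi> ^ j" for i j
  proof (rule ccontr)
    assume "i \<noteq> j"
    have "\<xi> ^ j = \<xi> ^ i * \<xi> ^ (j - i)" using that(3) by (simp flip: power_add)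
    hence "\<xi> ^ (j - i) = 1" using that(4) nz by simp
    thus False using xi_pow1[OF assms, of "j - i"] that \<open>i \<noteq> j\<close> by auto
  qed
  fix i j assume "i \<in> {..<p}" "j \<in> {..<p}" "\<xi> ^ i = \<xi> ^ j"
  thus "i = j" using *[of i j] *[of j i] by (cases "i \<le> j") auto
qed

lemma roots_unity:
  fixes \<xi> \<zeta> :: "'k::field"
  assumes "prime p" "\<xi> ^ p = 1" "\<xi> \<noteq> 1" "\<zeta> ^ p = 1"
  shows "\<exists>k<p. \<zeta> = \<xi> ^ k"
proof -
  define Q :: "'k poly" where "Q = monom 1 p + (- 1)"
  have p0: "p > 0" using assms(1) prime_gt_0_nat by blast
  have dm: "degree (monom (1::'k) p) = p" by (simp add: degree_monom_eq)
  have "degree (-1 :: 'k poly) = 0" by simp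
  hence dQ: "degree Q = p" unfolding Q_def using p0 dm by (simp only: degree_add_eq_left)
  hence Qnz: "Q \<noteq> 0" using p0 by auto
  have R: "{x. poly Q x = 0} = {x. x ^ p = 1}" unfolding Q_def by (simp add: poly_monom)
  have fin: "finite {x. poly Q x = 0}" using poly_roots_finite[OF Qnz] .
  have cb: "card {x. poly Q x = 0} \<le> p" using card_poly_roots_bound[OF Qnz] dQ by simp
  have sub: "(\<lambda>i. \<xi> ^ i) ` {..<p} \<subseteq> {x. poly Q x = 0}" unfolding R
  proof
    fix x assume "x \<in> (\<lambda>i. \<xi> ^ i) ` {..<p}"
    then obtain i where "x = \<xi> ^ i" by auto
    hence "x ^ p = (\<xi> ^ p) ^ i" by (simp only: power_mult[symmetric] mult.commute)
    then show "x \<in> {x. x ^ p = 1}" using assms(2) by simp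
  qed
  have ci: "card ((\<lambda>i. \<xi> ^ i) ` {..<p}) = p"
    using card_image[OF xi_inj[OF assms(1-3)]] by simp
  have "(\<lambda>i. \<xi> ^ i) ` {..<p} = {x. poly Q x = 0}"
    by (rule card_seteq[OF fin sub]) (simp only: ci cb)
  moreover have "\<zeta> \<in> {x. poly Q x = 0}" using R assms(4) by simp
  ultimately show ?thesis by auto
qed

lemma poly_vanish:
  fixes \<xi> :: "'k::field" and w :: "nat \<Rightarrow> 'k"
  assumes "prime p" "\<xi> ^ p = 1" "\<xi> \<noteq> 1" "w 0 \<noteq> 0"
    and van: "\<forall>i<p. (\<Sum>k<p. w k * (\<xi> ^ i) ^ k) = 0"
  shows False
proof -
  define P where "P = (\<Sum>k<p. monom (w k) k)"
  have p0: "p > 0" using assms(1) prime_gt_0_nat by blast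
  have "coeff P 0 = w 0" unfolding P_def coeff_sum using p0
    by (simp add: coeff_monom sum.delta' )
  hence Pnz: "P \<noteq> 0" using assms(4) by auto
  have dP: "degree P \<le> p - 1" unfolding P_def
    by (rule degree_sum_le) (auto simp: degree_monom_le intro: order.trans[OF degree_monom_le])
  have ev: "poly P x = (\<Sum>k<p. w k * x ^ k)" for x unfolding P_def by (simp add: poly_sum poly_monom)
  have sub: "(\<lambda>i. \<xi> ^ i) ` {..<p} \<subseteq> {x. poly P x = 0}" using van ev by auto
  have ci: "card ((\<lambda>i. \<xi> ^ i) ` {..<p}) = p"
    using card_image[OF xi_inj[OF assms(1-3)]] by simp
  have "p \<le> card {x. poly P x = 0}"
    using card_mono[OF poly_roots_finite[OF Pnz] sub] ci by simp
  also have "\<dots> \<le> degree P" using card_poly_roots_bound[OF Pnz] .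
  finally show False using dP p0 by simp
qed

theorem lemma4:
  fixes \<sigma> :: "'k::field \<Rightarrow> 'k" and \<xi> \<alpha> a \<gamma> :: 'k and p :: nat
  assumes p_prime: "prime p" and p_odd: "odd p"
    and aut: "field_aut \<sigma>"
    and sigma_order: "\<sigma> ^^ p = id" and sigma_nontriv: "\<sigma> \<noteq> id"
    and xi_F: "\<xi> \<in> fixed_field \<sigma>" and xi_root: "\<xi> ^ p = 1" and xi_ne1: "\<xi> \<noteq> 1"
    and a_F: "a \<in> fixed_field \<sigma>" and a_nz: "a \<noteq> 0"
    and alpha_root: "\<alpha> ^ p = a" and sigma_alpha: "\<sigma> \<alpha> = \<xi> * \<alpha>"
    and generated: "\<forall>x. \<exists>c. (\<forall>i<p. c i \<in> fixed_field \<sigma>) \<and> x = (\<Sum>i<p. c i * \<alpha> ^ i)"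
    and J1: "in_J1 \<sigma> p \<gamma>"
    and e0: "e_index \<sigma> \<xi> p \<gamma> = 0"
  shows "\<exists>f \<in> fixed_field \<sigma>. f \<noteq> 0 \<and> is_pth_power p (\<gamma> / f)"
proof -
  have p0: "p > 0" using p_prime prime_gt_0_nat by blast
  have gnz: "\<gamma> \<noteq> 0" using J1 by (simp add: in_J1_def)
  obtain \<beta> where bnz: "\<beta> \<noteq> 0" and bq: "\<sigma> \<gamma> / \<gamma> = \<beta> ^ p"
    using J1 by (auto simp: in_J1_def is_pth_power_def)
  have hg: "\<sigma> \<gamma> = \<gamma> * \<beta> ^ p" using bq gnz by (simp add: divide_eq_eq mult.commute)
  define w where "w = wseq \<sigma> \<beta>"
  have w0: "w 0 = 1" and wS: "\<And>k. w (Suc k) = \<beta> * \<sigma> (w k)" by (simp_all add: w_def)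
  have wnz: "w k \<noteq> 0" for k
    by (induction k) (simp_all add: w0 wS bnz fa_nz[OF aut])
  have sg: "(\<sigma> ^^ k) \<gamma> = \<gamma> * w k ^ p" for k
  proof (induction k)
    case 0 then show ?case by (simp add: w0)
  next
    case (Suc k)
    have "(\<sigma> ^^ Suc k) \<gamma> = \<sigma> (\<gamma> * w k ^ p)" using Suc by simp
    also have "\<dots> = \<gamma> * \<beta> ^ p * \<sigma> (w k) ^ p" by (simp add: fa_mult[OF aut] fa_pow[OF aut] hg)
    also have "\<dots> = \<gamma> * w (Suc k) ^ p" by (simp add: wS power_mult_distrib)
    finally show ?case .
  qed
  have wp1: "w p ^ p = 1"
  proof -
    have "\<gamma> = \<gamma> * w p ^ p" using sg[of p] sigma_order by simp
    thus ?thesis using gnz by simp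
  qed
  define W where "W = (\<Prod>k<p. w k)"
  have Wnz: "W \<noteq> 0" unfolding W_def using wnz by simp
  have N: "normKF \<sigma> p \<gamma> = (\<gamma> * W) ^ p"
    unfolding normKF_def W_def sg by (simp add: prod.distrib power_mult_distrib prod_power_distrib)
  have sW: "\<beta> ^ p * \<sigma> W = W * w p"
  proof -
    have "\<beta> ^ p * \<sigma> W = (\<Prod>k<p. \<beta> * \<sigma> (w k))"
      unfolding W_def by (simp add: fa_prod[OF aut] prod.distrib)
    also have "\<dots> = (\<Prod>k<p. w (Suc k))" by (simp add: wS)
    also have "\<dots> = (\<Prod>k<Suc p. w k)" by (subst prod.lessThan_Suc_shift) (simp add: w0)
    also have "\<dots> = W * w p" by (simp add: W_def)
    finally show ?thesis .
  qed
  have xinz: "\<xi> \<noteq> 0"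
  proof
    assume "\<xi> = 0"
    then have "\<xi> ^ p = 0" using p0 by simp
    with xi_root show False by simp
  qed
  define \<delta> where "\<delta> = (SOME \<delta>. \<delta> ^ p = normKF \<sigma> p \<gamma>)"
  have hd: "\<delta> ^ p = (\<gamma> * W) ^ p"
    unfolding \<delta>_def N by (rule someI_ex) blast
  have "(\<delta> / (\<gamma> * W)) ^ p = 1" using hd gnz Wnz by (simp add: power_divide)
  then obtain m where "\<delta> / (\<gamma> * W) = \<xi> ^ m"
    using roots_unity[OF p_prime xi_root xi_ne1] by blast
  hence dm: "\<delta> = \<xi> ^ m * (\<gamma> * W)" using gnz Wnz by (simp add: divide_eq_eq)
  have sxi: "\<sigma> (\<xi> ^ m) = \<xi> ^ m" using xi_F by (simp add: fa_pow[OF aut] fixed_field_def)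
  have sd: "\<sigma> \<delta> = w p * \<delta>"
  proof -
    have "\<sigma> \<delta> = \<xi> ^ m * (\<gamma> * (\<beta> ^ p * \<sigma> W))"
      unfolding dm by (simp add: fa_mult[OF aut] sxi hg ac_simps)
    also have "\<dots> = w p * \<delta>" unfolding sW dm by (simp add: ac_simps)
    finally show ?thesis .
  qed
  obtain k where "k < p" "w p = \<xi> ^ k"
    using roots_unity[OF p_prime xi_root xi_ne1 wp1] by blast
  hence ex: "\<exists>k. k < p \<and> \<sigma> \<delta> = \<xi> ^ k * \<delta>" using sd by auto
  have "\<sigma> \<delta> = \<xi> ^ 0 * \<delta>"
    using someI_ex[OF ex] e0 unfolding e_index_def Let_def \<delta>_def[symmetric] by simp
  hence "\<sigma> \<delta> = \<delta>" by simp
  moreover have "\<delta> \<noteq> 0" using dm gnz Wnz xinz by simp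
  ultimately have wp: "w p = 1" using sd by simp
  define c where "c \<theta> = (\<Sum>k<p. w k * (\<sigma> ^^ k) \<theta>)" for \<theta>
  have hc: "\<beta> * \<sigma> (c \<theta>) = c \<theta>" for \<theta>
  proof -
    have "\<beta> * \<sigma> (c \<theta>) = (\<Sum>k<p. w (Suc k) * (\<sigma> ^^ Suc k) \<theta>)"
      unfolding c_def by (simp add: fa_sum[OF aut] fa_mult[OF aut] sum_distrib_left wS ac_simps)
    also have "\<dots> = (\<Sum>k<Suc p. w k * (\<sigma> ^^ k) \<theta>) - \<theta>"
      by (subst sum.lessThan_Suc_shift) (simp add: w0)
    also have "\<dots> = c \<theta>" unfolding c_def using wp sigma_order by simp
    finally show ?thesis .
  qed
  have anz: "\<alpha> \<noteq> 0" using alpha_root a_nz p0 by auto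
  have salpha: "(\<sigma> ^^ k) \<alpha> = \<xi> ^ k * \<alpha>" for k
  proof (induction k)
    case 0 then show ?case by simp
  next
    case (Suc k)
    then show ?case using xi_F sigma_alpha
      by (simp add: fa_mult[OF aut] fa_pow[OF aut] fixed_field_def ac_simps)
  qed
  have calpha: "c (\<alpha> ^ i) = \<alpha> ^ i * (\<Sum>k<p. w k * (\<xi> ^ i) ^ k)" for i
  proof -
    have "(\<sigma> ^^ k) (\<alpha> ^ i) = (\<xi> ^ i) ^ k * \<alpha> ^ i" for k
      using fa_pow[OF fa_funpow[OF aut, of k]] salpha
      by (simp add: power_mult_distrib power_mult[symmetric] mult.commute)
    thus ?thesis unfolding c_def by (simp add: sum_distrib_left ac_simps)
  qed
  obtain i where "c (\<alpha> ^ i) \<noteq> 0"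
  proof (rule ccontr)
    assume "\<not> thesis"
    hence "\<forall>i<p. (\<Sum>k<p. w k * (\<xi> ^ i) ^ k) = 0"
      using that calpha anz by auto
    thus False using poly_vanish[OF p_prime xi_root xi_ne1, of w] w0 by simp
  qed
  then obtain c0 where c0nz: "c0 \<noteq> 0" and hc0: "\<beta> * \<sigma> c0 = c0" using hc by blast
  define u where "u = 1 / c0"
  have unz: "u \<noteq> 0" using c0nz by (simp add: u_def)
  have sc0: "\<sigma> c0 = c0 / \<beta>" using hc0 bnz by (simp add: eq_divide_eq mult.commute)
  have su: "\<sigma> u = \<beta> * u"
    unfolding u_def fa_div[OF aut] fa_one[OF aut] sc0 by simp
  define f where "f = \<gamma> / u ^ p"
  have fF: "f \<in> fixed_field \<sigma>"
    unfolding fixed_field_def f_def using bnz unz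
    by (simp add: fa_div[OF aut] fa_pow[OF aut] su hg power_mult_distrib)
  have fnz: "f \<noteq> 0" using gnz unz by (simp add: f_def)
  have "\<gamma> / f = u ^ p" using gnz unz by (simp add: f_def)
  hence fpp: "is_pth_power p (\<gamma> / f)"
    unfolding is_pth_power_def using unz by blast
  show ?thesis using fF fnz fpp by blast
qed

end
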